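(* Let $K\ge 2$ and let $\boldsymbol{x}_1\in\mathbb{R}^{p_1},\dots,\boldsymbol{x}_K\in\mathbb{R}^{p_K}$ be random vectors whose entries lie in $\mathcal{L}_0^2$. Let $r_k=\dim\operatorname{span}(\boldsymbol{x}_k^\top)\ge 1$ and $r_f=\dim\sum_{k=1}^K\operatorname{span}(\boldsymbol{x}_k^\top)$. Let $\boldsymbol{f}_k\in\mathbb{R}^{r_k}$ be a random vector whose entries form an orthonormal basis of $\operatorname{span}(\boldsymbol{x}_k^\top)$ (so $\operatorname{cov}(\boldsymbol{f}_k)=\mathbf{I}_{r_k}$), let $\boldsymbol{f}=(\boldsymbol{f}_1^\top,\dots,\boldsymbol{f}_K^\top)^\top$, and let $\boldsymbol{\eta}^{(1)},\dots,\boldsymbol{\eta}^{(r_f)}$ be orthonormal eigenvectors of $\operatorname{cov}(\boldsymbol{f})$ with $\boldsymbol{\eta}^{(\ell)}$ corresponding to the $\ell$th largest eigenvalue $\lambda_\ell(\operatorname{cov}(\boldsymbol{f}))$; write $\boldsymbol{\eta}^{(\ell)}=((\boldsymbol{\eta}^{(\ell)}_1)^\top,\dots,(\boldsymbol{\eta}^{(\ell)}_K)^\top)^\top$ with $\boldsymbol{\eta}^{(\ell)}_k\in\mathbb{R}^{r_k}$. (Note $r_f=\operatorname{rank}\operatorname{cov}(\boldsymbol{f})$.) Consider, for $\ell=1,\dots,r_f$, the $\ell$th stage of Carroll's GCCA: $$\max_{z_1,\dots,z_K,w}\ \sum_{k=1}^K\cos^2\{\theta(z_k,w)\}\quad\text{s.t.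 } z_k\in\operatorname{span}(\boldsymbol{x}_k^\top),\ \|z_k\|=1\ (k\le K),\quad w\in\mathcal{L}_0^2,\ \|w\|=1,\ w\perp w^{(j)}\ (0\le j\le \ell-1),$$ where $w^{(0)}=0$ and $w^{(1)},\dots,w^{(\ell-1)}$ are the auxiliary variables chosen at the earlier stages. Then: (i) For every $\ell\le r_f$ and $k\le K$, a solution $(z^{(\ell)}_1,\dots,z^{(\ell)}_K,w^{(\ell)})$ of stage $\ell$ (with earlier stages solved in the same way) is given by $$w^{(\ell)}=[\lambda_\ell(\operatorname{cov}(\boldsymbol{f}))]^{-1/2}(\boldsymbol{\eta}^{(\ell)})^\top\boldsymbol{f},\qquad z_k^{(\ell)}=\begin{cases}\text{any standardized variable in }\operatorname{span}(\boldsymbol{x}_k^\top),&\boldsymbol{\eta}_k^{(\ell)}=\boldsymbol{0},\\ \pm(\boldsymbol{\eta}_k^{(\ell)}/\|\boldsymbol{\eta}_k^{(\ell)}\|_F)^\top\boldsymbol{f}_k,&\boldsymbol{\eta}_k^{(\ell)}\neq\boldsymbol{0}.\end{cases}$$ Moreover, $\cos\{\theta(z_k^{(\ell)},w^{(\ell)})\}=\pm[\lambda_\ell(\operatorname{cov}(\boldsymbol{f}))]^{1/2}\|\boldsymbol{\eta}_k^{(\ell)}\|_F$, $\sum_{k=1}^K\cos^2\{\theta(z_k^{(\ell)},w^{(\ell)})\}=\lambda_\ell(\operatorname{cov}(\boldsymbol{f}))$, and $\sum_{k=1}^K\operatorname{span}(\boldsymbol{x}_k^\top)=\operatorname{span}(\{w^{(\ell)}\}_{\ell=1}^{r_f})$.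 (ii) For $\ell\le r_f$, redefine $z_k^{(\ell)}=0$ if $\boldsymbol{\eta}_k^{(\ell)}=\boldsymbol{0}$ (equivalently $w^{(\ell)}\perp\operatorname{span}(\boldsymbol{x}_k^\top)$) and $z_k^{(\ell)}=(\boldsymbol{\eta}_k^{(\ell)}/\|\boldsymbol{\eta}_k^{(\ell)}\|_F)^\top\boldsymbol{f}_k$ otherwise. Then $\theta(z_k^{(\ell)},w^{(\ell)})\in[0,\pi/2]$ and $\operatorname{span}(\{z_k^{(\ell)}\}_{\ell=1}^{r_f})=\operatorname{span}(\boldsymbol{x}_k^\top)$ for every $k\le K$. (iii) For $z_k^{(\ell)}$ defined either as in (i) or as in (ii): if for some $\ell\le r_f$ and some $k\le K$ we have $\lambda_\ell(\operatorname{cov}(\boldsymbol{f}))\le 1$ and $\operatorname{span}(\{z_k^{(m)}\}_{m=1}^{\ell-1})\neq\operatorname{span}(\boldsymbol{x}_k^\top)$, then there exists a solution $w^{(\ell)}$ of the $\ell$th stage with $w^{(\ell)}\in\operatorname{span}(\boldsymbol{x}_k^\top)$ and $w^{(\ell)}\perp\sum_{1\le j\neq k\le K}\operatorname{span}(\boldsymbol{x}_j^\top)$.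
   Context: $\mathcal{L}_0^2$ denotes the vector space of real-valued random variables with zero mean and finite variance, endowed with the covariance $\operatorname{cov}(\cdot,\cdot)$ as inner product; $\|x\|=\sqrt{\operatorname{var}(x)}$, $\perp$ means zero covariance (uncorrelatedness), and $\theta(x,y)$ is the angle in this inner product space, so $\cos\{\theta(x,y)\}=\operatorname{corr}(x,y)$ with the convention $\operatorname{corr}(x,0)=0$. For a random vector $\boldsymbol{v}$ with entries in $\mathcal{L}_0^2$, $\operatorname{span}(\boldsymbol{v}^\top)$ is the subspace of $\mathcal{L}_0^2$ spanned by its entries, and sums of subspaces are the usual sums. A standardized variable is one with unit variance. *)

theory Defs
  imports "HOL-Analysis.Analysis"
begin

text \<open>The space L_0^2 with the covariance inner product is modelled by an abstract
  real inner product space 'v: inner = cov, norm = standard deviation.\<close>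

definition corr :: "'v::real_inner \<Rightarrow> 'v \<Rightarrow> real" where
  "corr x y = inner x y / (norm x * norm y)"

definition theta :: "'v::real_inner \<Rightarrow> 'v \<Rightarrow> real" where
  "theta x y = arccos (corr x y)"

text \<open>Feasible set of a GCCA stage: X k is the set of entries of x_k,
  W the set of previously chosen auxiliary variables (including w^(0) = 0).\<close>
definition gcca_feasible ::
  "nat \<Rightarrow> (nat \<Rightarrow> 'v::real_inner set) \<Rightarrow> 'v set \<Rightarrow> (nat \<Rightarrow> 'v) \<Rightarrow> 'v \<Rightarrow> bool" where
  "gcca_feasible K X W z w \<longleftrightarrow>
     (\<forall>k\<in>{1..K}. z k \<in> span (X k) \<and> norm (z k) = 1) \<and>
     norm w = 1 \<and> (\<forall>u\<in>W. inner w u = 0)"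

definition gcca_obj :: "nat \<Rightarrow> (nat \<Rightarrow> 'v::real_inner) \<Rightarrow> 'v \<Rightarrow> real" where
  "gcca_obj K z w = (\<Sum>k=1..K. (corr (z k) w)\<^sup>2)"

definition gcca_stage_solution ::
  "nat \<Rightarrow> (nat \<Rightarrow> 'v::real_inner set) \<Rightarrow> 'v set \<Rightarrow> (nat \<Rightarrow> 'v) \<Rightarrow> 'v \<Rightarrow> bool" where
  "gcca_stage_solution K X W z w \<longleftrightarrow>
     gcca_feasible K X W z w \<and>
     (\<forall>z' w'. gcca_feasible K X W z' w' \<longrightarrow> gcca_obj K z' w' \<le> gcca_obj K z w)"

text \<open>Blocks: eta l k i is the i-th entry (i < r k) of the k-th block of eta^(l).\<close>
definition blk_zero :: "nat \<Rightarrow> (nat \<Rightarrow> real) \<Rightarrow> bool" where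
  "blk_zero n v \<longleftrightarrow> (\<forall>i<n. v i = 0)"

definition blk_norm :: "nat \<Rightarrow> (nat \<Rightarrow> real) \<Rightarrow> real" where
  "blk_norm n v = sqrt (\<Sum>i<n. (v i)\<^sup>2)"

definition gcca_w ::
  "nat \<Rightarrow> (nat \<Rightarrow> nat) \<Rightarrow> (nat \<Rightarrow> nat \<Rightarrow> 'v::real_inner) \<Rightarrow> (nat \<Rightarrow> real)
   \<Rightarrow> (nat \<Rightarrow> nat \<Rightarrow> nat \<Rightarrow> real) \<Rightarrow> nat \<Rightarrow> 'v" where
  "gcca_w K r f lam eta l =
     (1 / sqrt (lam l)) *\<^sub>R (\<Sum>k=1..K. \<Sum>i<r k. eta l k i *\<^sub>R f k i)"

definition gcca_z_ii ::
  "(nat \<Rightarrow> nat) \<Rightarrow> (nat \<Rightarrow> nat \<Rightarrow> 'v::real_inner)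
   \<Rightarrow> (nat \<Rightarrow> nat \<Rightarrow> nat \<Rightarrow> real) \<Rightarrow> nat \<Rightarrow> nat \<Rightarrow> 'v" where
  "gcca_z_ii r f eta l k =
     (if blk_zero (r k) (eta l k) then 0
      else (\<Sum>i<r k. (eta l k i / blk_norm (r k) (eta l k)) *\<^sub>R f k i))"

definition gcca_z_i_choice ::
  "(nat \<Rightarrow> 'v::real_inner set) \<Rightarrow> (nat \<Rightarrow> nat) \<Rightarrow> (nat \<Rightarrow> nat \<Rightarrow> 'v)
   \<Rightarrow> (nat \<Rightarrow> nat \<Rightarrow> nat \<Rightarrow> real) \<Rightarrow> nat \<Rightarrow> nat \<Rightarrow> 'v \<Rightarrow> bool" where
  "gcca_z_i_choice X r f eta l k z \<longleftrightarrow>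
     (if blk_zero (r k) (eta l k) then z \<in> span (X k) \<and> norm z = 1
      else z = gcca_z_ii r f eta l k \<or> z = - gcca_z_ii r f eta l k)"

end

theory Submission
  imports Defs "HOL-Library.Function_Algebras"
begin


lemma sum_fun_app: "(sum h A) x = (\<Sum>a\<in>A. h a x)" for h :: "'b \<Rightarrow> 'a \<Rightarrow> real"
  by (induction A rule: infinite_finite_induct) auto

lemma onb_complete_aux:
  fixes S :: "'s set" and e :: "nat \<Rightarrow> 's \<Rightarrow> real" and c :: "'s \<Rightarrow> real"
  assumes fin: "finite S" and cardS: "card S = n"
    and orth: "\<forall>l\<in>{1..n}. \<forall>m\<in>{1..n}. (\<Sum>s\<in>S. e l s * e m s) = (if l=m then 1 else 0)"
    and cperp: "\<forall>m\<in>{1..n}. (\<Sum>s\<in>S. c s * e m s) = 0"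
  shows "\<forall>s\<in>S. c s = 0"
proof (rule ccontr)
  assume "\<not> (\<forall>s\<in>S. c s = 0)"
  then obtain s1 where s1: "s1 \<in> S" "c s1 \<noteq> 0" by auto
  interpret fv: vector_space "\<lambda>(a::real) (g::'s\<Rightarrow>real). (\<lambda>x. a * g x)"
    by unfold_locales (auto simp: fun_eq_iff algebra_simps)
  define restr where "restr g = (\<lambda>s. if s \<in> S then g s else 0)" for g :: "'s \<Rightarrow> real"
  define ip where "ip g h = (\<Sum>s\<in>S. g s * h s)" for g h :: "'s \<Rightarrow> real"
  define E where "E = (\<lambda>m. restr (e m)) ` {1..n}"
  define B where "B = insert (restr c) E"
  define D where "D = (\<lambda>s0. (\<lambda>s. if s = s0 then (1::real) else 0)) ` S"
  have ip_restr: "ip (restr g) (restr h) = ip g h" for g h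
    unfolding ip_def restr_def by (rule sum.cong) auto
  have ipE: "ip (restr (e l)) (restr (e m)) = (if l = m then 1 else 0)" if "l \<in> {1..n}" "m \<in> {1..n}" for l m
    using orth that by (simp only: ip_restr) (simp add: ip_def)
  have ipc: "ip (restr c) (restr (e m)) = 0" if "m \<in> {1..n}" for m
    using cperp that by (simp only: ip_restr) (simp add: ip_def)
  have ipcc: "ip (restr c) (restr c) > 0"
  proof -
    have "ip (restr c) (restr c) = (\<Sum>s\<in>S. (c s)\<^sup>2)" by (simp only: ip_restr) (simp add: ip_def power2_eq_square)
    also have "\<dots> > 0" using s1 fin
      by (intro sum_pos2[of S s1]) auto
    finally show ?thesis .
  qed
  have injE: "inj_on (\<lambda>m. restr (e m)) {1..n}"
  proof (rule inj_onI)
    fix l m assume "l \<in> {1..n}" "m \<in> {1..n}" "restr (e l) = restr (e m)"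
    then show "l = m" using ipE[of l l] ipE[of l m] by (metis zero_neq_one)
  qed
  have cardE: "card E = n" unfolding E_def using card_image[OF injE] by simp
  have cnotE: "restr c \<notin> E"
  proof
    assume "restr c \<in> E"
    then obtain m where m: "m \<in> {1..n}" "restr c = restr (e m)" unfolding E_def by auto
    then show False using ipc[of m] ipE[of m m] by simp
  qed
  have ipB: "ip v v' = (if v = v' then ip v v else 0) \<and> (v = v' \<longrightarrow> ip v v \<noteq> 0)" if "v \<in> B" "v' \<in> B" for v v'
  proof -
    have ipsym: "ip g h = ip h g" for g h unfolding ip_def by (simp add: mult.commute)
    from that have "(v = restr c \<or> (\<exists>l\<in>{1..n}. v = restr (e l))) \<and> (v' = restr c \<or> (\<exists>l\<in>{1..n}. v' = restr (e l)))"
      unfolding B_def E_def by auto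
    then show ?thesis
    proof (elim conjE disjE bexE)
      assume "v = restr c" "v' = restr c" then show ?thesis using ipcc by simp
    next
      fix l assume "v = restr c" "l \<in> {1..n}" "v' = restr (e l)"
      moreover have "v \<noteq> v'" using cnotE calculation unfolding E_def by (metis image_eqI)
      ultimately show ?thesis using ipc by simp
    next
      fix l assume "v' = restr c" "l \<in> {1..n}" "v = restr (e l)"
      moreover have "v \<noteq> v'" using cnotE calculation unfolding E_def by (metis image_eqI)
      ultimately show ?thesis using ipc ipsym by simp
    next
      fix l m assume "l \<in> {1..n}" "v = restr (e l)" "m \<in> {1..n}" "v' = restr (e m)"
      then show ?thesis using ipE[of l m] ipE[of l l] by (cases "l = m") auto
    qed
  qed
  have cardB: "card B = Suc n" unfolding B_def using cnotE cardE
    by (simp add: E_def)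
  have ip_sum: "ip (\<Sum>v\<in>T. (\<lambda>x. u v * v x)) h = (\<Sum>v\<in>T. u v * ip v h)" for T u h
    unfolding ip_def sum_fun_app by (simp add: sum_distrib_right sum_distrib_left mult.assoc sum.swap[of _ T])
  have indep: "fv.independent B"
    unfolding fv.independent_explicit_module
  proof (intro allI impI)
    fix T u v assume fT: "finite T" and TB: "T \<subseteq> B" and sum0: "(\<Sum>v\<in>T. (\<lambda>x. u v * v x)) = 0" and v: "v \<in> T"
    have "0 = ip (\<Sum>v\<in>T. (\<lambda>x. u v * v x)) v" by (simp add: sum0 ip_def)
    also have "\<dots> = (\<Sum>v'\<in>T. u v' * ip v' v)" by (rule ip_sum)
    also have "\<dots> = (\<Sum>v'\<in>T. if v' = v then u v * ip v v else 0)"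
    proof (rule sum.cong)
      fix v' assume "v' \<in> T"
      then have "ip v' v = (if v' = v then ip v' v' else 0)" using ipB[of v' v] v TB by (auto simp: subset_iff)
      then show "u v' * ip v' v = (if v' = v then u v * ip v v else 0)" by auto
    qed simp
    also have "\<dots> = u v * ip v v" using v fT by simp
    finally show "u v = 0" using ipB[of v v] v TB by auto
  qed
  have spanB: "B \<subseteq> fv.span D"
  proof
    fix g assume "g \<in> B"
    then obtain h where g: "g = restr h" unfolding B_def E_def by auto
    have "g = (\<Sum>s0\<in>S. (\<lambda>x. h s0 * (\<lambda>s. if s = s0 then (1::real) else 0) x))"
    proof -
      have "\<And>x a. h a * (if x = a then (1::real) else 0) = (if a = x then h a else 0)" by auto
      then show ?thesis unfolding g by (auto simp: fun_eq_iff sum_fun_app restr_def fin)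
    qed
    also have "\<dots> \<in> fv.span D"
      by (intro fv.span_sum fv.span_scale fv.span_base) (auto simp: D_def)
    finally show "g \<in> fv.span D" .
  qed
  have "finite B \<and> card B \<le> card D"
    using fv.independent_span_bound[OF _ indep spanB] fin by (simp add: D_def)
  moreover have "card D \<le> n" unfolding D_def using card_image_le[OF fin] cardS by simp
  ultimately show False using cardB by simp
qed


lemma onb_complete:
  fixes S :: "'s set" and e :: "nat \<Rightarrow> 's \<Rightarrow> real"
  assumes fin: "finite S" and cardS: "card S = n"
    and orth: "\<forall>l\<in>{1..n}. \<forall>m\<in>{1..n}. (\<Sum>s\<in>S. e l s * e m s) = (if l=m then 1 else 0)"
  shows "\<forall>s\<in>S. \<forall>t\<in>S. (\<Sum>m=1..n. e m s * e m t) = (if s = t then 1 else 0)"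
proof (intro ballI)
  fix s0 t assume s0: "s0 \<in> S" and t: "t \<in> S"
  define c where "c t = (if t = s0 then 1 else 0) - (\<Sum>m=1..n. e m s0 * e m t)" for t
  have "\<forall>l\<in>{1..n}. (\<Sum>s\<in>S. c s * e l s) = 0"
  proof
    fix l assume l: "l \<in> {1..n}"
    have A: "(\<Sum>s\<in>S. c s * e l s) = (\<Sum>s\<in>S. (if s = s0 then e l s else 0)) - (\<Sum>s\<in>S. (\<Sum>m=1..n. e m s0 * e m s) * e l s)"
    proof -
      have "(\<Sum>s\<in>S. c s * e l s) = (\<Sum>s\<in>S. (if s = s0 then e l s else 0) - (\<Sum>m=1..n. e m s0 * e m s) * e l s)"
        by (rule sum.cong) (auto simp: c_def left_diff_distrib)
      then show ?thesis by (simp only: sum_subtractf)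
    qed
    have B: "(\<Sum>s\<in>S. (\<Sum>m=1..n. e m s0 * e m s) * e l s) = (\<Sum>m=1..n. e m s0 * (\<Sum>s\<in>S. e m s * e l s))"
      by (simp add: sum_distrib_right sum_distrib_left mult.assoc) (rule sum.swap)
    have C: "(\<Sum>m=1..n. e m s0 * (\<Sum>s\<in>S. e m s * e l s)) = (\<Sum>m=1..n. if m = l then e m s0 else 0)"
      by (rule sum.cong) (use orth l in auto)
    have C2: "(\<Sum>m=1..n. if m = l then e m s0 else 0) = e l s0" using l by simp
    have D: "(\<Sum>s\<in>S. (if s = s0 then e l s else 0)) = e l s0" using s0 fin by simp
    show "(\<Sum>s\<in>S. c s * e l s) = 0" using A B C C2 D by simp
  qed
  from onb_complete_aux[OF fin cardS orth this] t have "c t = 0" by blast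
  then show "(\<Sum>m=1..n. e m s0 * e m t) = (if s0 = t then 1 else 0)"
    unfolding c_def by auto
qed

lemma orth_span_gen:
  fixes z :: "'v::real_inner"
  assumes "v \<in> span A" "\<And>a. a \<in> A \<Longrightarrow> inner z a = 0"
  shows "inner z v = 0"
  using orthogonal_to_span[of v A z] assms unfolding orthogonal_def by blast

lemma onb_expand:
  fixes g :: "nat \<Rightarrow> 'v::real_inner"
  assumes orth: "\<forall>i<n. \<forall>j<n. inner (g i) (g j) = (if i = j then 1 else 0)"
    and y: "y \<in> span (g ` {..<n})"
  shows "y = (\<Sum>i<n. inner y (g i) *\<^sub>R g i)"
proof -
  define d where "d = y - (\<Sum>i<n. inner y (g i) *\<^sub>R g i)"
  have dspan: "d \<in> span (g ` {..<n})" unfolding d_def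
    by (intro span_diff y span_sum span_scale span_base) auto
  have dg: "inner d (g j) = 0" if "j < n" for j
  proof -
    have "inner (\<Sum>i<n. inner y (g i) *\<^sub>R g i) (g j) = (\<Sum>i<n. if i = j then inner y (g i) else 0)"
      unfolding inner_sum_left using orth that by (intro sum.cong) auto
    also have "\<dots> = inner y (g j)" using that by simp
    finally show ?thesis unfolding d_def by (simp add: inner_diff_left)
  qed
  have "inner d d = 0" by (rule orth_span_gen[OF dspan]) (use dg in auto)
  then show ?thesis unfolding d_def by simp
qed

lemma onb_inner_comb:
  fixes g :: "nat \<Rightarrow> 'v::real_inner"
  assumes orth: "\<forall>i<n. \<forall>j<n. inner (g i) (g j) = (if i = j then 1 else 0)" and "j < n"
  shows "inner (\<Sum>i<n. c i *\<^sub>R g i) (g j) = c j"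
proof -
  have "inner (\<Sum>i<n. c i *\<^sub>R g i) (g j) = (\<Sum>i<n. if i = j then c i else 0)"
    unfolding inner_sum_left using orth assms(2) by (intro sum.cong) auto
  then show ?thesis using assms(2) by simp
qed

lemma onb_norm_comb:
  fixes g :: "nat \<Rightarrow> 'v::real_inner"
  assumes orth: "\<forall>i<n. \<forall>j<n. inner (g i) (g j) = (if i = j then 1 else 0)"
  shows "inner (\<Sum>i<n. c i *\<^sub>R g i) (\<Sum>i<n. c i *\<^sub>R g i) = (\<Sum>i<n. (c i)\<^sup>2)"
proof -
  have "inner (\<Sum>i<n. c i *\<^sub>R g i) (\<Sum>i<n. c i *\<^sub>R g i) = (\<Sum>j<n. c j * inner (\<Sum>i<n. c i *\<^sub>R g i) (g j))"
    by (simp add: inner_sum_right)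
  also have "\<dots> = (\<Sum>j<n. (c j)\<^sup>2)"
    using onb_inner_comb[OF orth] by (simp add: power2_eq_square)
  finally show ?thesis .
qed

lemma onb_norm:
  fixes g :: "nat \<Rightarrow> 'v::real_inner"
  assumes orth: "\<forall>i<n. \<forall>j<n. inner (g i) (g j) = (if i = j then 1 else 0)"
    and y: "y \<in> span (g ` {..<n})"
  shows "inner y y = (\<Sum>i<n. (inner y (g i))\<^sup>2)"
proof -
  define c where "c = (\<lambda>i. inner y (g i))"
  have e: "y = (\<Sum>i<n. c i *\<^sub>R g i)" using onb_expand[OF orth y] unfolding c_def .
  have "inner y y = (\<Sum>i<n. (c i)\<^sup>2)" using onb_norm_comb[OF orth, of c] e by simp
  then show ?thesis unfolding c_def .
qed

lemma onb_inner:
  fixes g :: "nat \<Rightarrow> 'v::real_inner"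
  assumes orth: "\<forall>i<n. \<forall>j<n. inner (g i) (g j) = (if i = j then 1 else 0)"
    and y: "y \<in> span (g ` {..<n})"
  shows "inner y v = (\<Sum>i<n. inner y (g i) * inner (g i) v)"
  by (subst onb_expand[OF orth y]) (simp add: inner_sum_left)

lemma bessel:
  fixes w :: "nat \<Rightarrow> 'v::real_inner"
  assumes fin: "finite P" and orth: "\<forall>l\<in>P. \<forall>m\<in>P. inner (w l) (w m) = (if l = m then 1 else 0)"
  shows "(\<Sum>m\<in>P. (inner (w m) v)\<^sup>2) \<le> inner v v"
proof -
  define q where "q = (\<Sum>m\<in>P. inner (w m) v *\<^sub>R w m)"
  have qw: "inner q (w j) = inner (w j) v" if "j \<in> P" for j
  proof -
    have "inner q (w j) = (\<Sum>m\<in>P. if m = j then inner (w m) v else 0)"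
      unfolding q_def inner_sum_left using orth that by (intro sum.cong) auto
    then show ?thesis using that fin by simp
  qed
  have qq: "inner q q = (\<Sum>m\<in>P. (inner (w m) v)\<^sup>2)"
    by (subst (2) q_def) (simp add: inner_sum_right qw power2_eq_square)
  have qv: "inner q v = (\<Sum>m\<in>P. (inner (w m) v)\<^sup>2)"
    unfolding q_def inner_sum_left by (simp add: power2_eq_square)
  have "0 \<le> inner (v - q) (v - q)" by simp
  also have "\<dots> = inner v v - 2 * inner q v + inner q q"
    by (simp add: inner_diff_left inner_diff_right inner_commute)
  finally show ?thesis using qq qv by simp
qed

lemma GS_exists:
  fixes A :: "'v::real_inner set"
  assumes "finite A"
  shows "\<exists>C. finite C \<and> pairwise orthogonal C \<and> span C = span A"
  using assms
proof (induction A rule: finite_induct)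
  case empty then show ?case by (intro exI[of _ "{}"]) auto
next
  case (insert a A)
  then obtain C where C: "finite C" "pairwise orthogonal C" "span C = span A" by blast
  define a' where "a' = a - (\<Sum>b\<in>C. (inner b a / inner b b) *\<^sub>R b)"
  have a'C: "orthogonal a' x" if "x \<in> C" for x
  proof -
    have "inner (\<Sum>b\<in>C. (inner b a / inner b b) *\<^sub>R b) x = (\<Sum>b\<in>C. if b = x then inner b a / inner b b * inner b x else 0)"
      unfolding inner_sum_left using C(2) that by (intro sum.cong) (auto simp: pairwise_def orthogonal_def)
    also have "\<dots> = inner x a" using C(1) that by (cases "x = 0") auto
    finally have "inner a' x = inner a x - inner x a" unfolding a'_def by (simp add: inner_diff_left)
    then show ?thesis unfolding orthogonal_def by (simp add: inner_commute)
  qed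
  have "span (insert a' C) = span (insert a C)"
    by (rule eq_span_insert_eq) (simp add: a'_def span_neg span_sum span_scale span_base)
  also have "\<dots> = span (insert a A)" by (simp only: span_insert C(3))
  finally show ?case using C a'C
    by (intro exI[of _ "insert a' C"]) (auto intro: pairwise_orthogonal_insert)
qed

lemma exists_orth_vec:
  fixes Z :: "'v::real_inner set"
  assumes fin: "finite Z" and ZY: "Z \<subseteq> span Y" and ne: "span Z \<noteq> span Y"
  shows "\<exists>z\<in>span Y. norm z = 1 \<and> (\<forall>u\<in>Z. inner z u = 0)"
proof -
  have "span Z \<subseteq> span Y" using ZY by (simp add: span_minimal)
  with ne obtain y where y: "y \<in> span Y" "y \<notin> span Z" by blast
  obtain C where C: "finite C" "pairwise orthogonal C" "span C = span Z" using GS_exists[OF fin] by blast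
  define a' where "a' = y - (\<Sum>b\<in>C. (inner b y / inner b b) *\<^sub>R b)"
  have a'C: "inner a' x = 0" if "x \<in> C" for x
  proof -
    have "inner (\<Sum>b\<in>C. (inner b y / inner b b) *\<^sub>R b) x = (\<Sum>b\<in>C. if b = x then inner b y / inner b b * inner b x else 0)"
      unfolding inner_sum_left using C(2) that by (intro sum.cong) (auto simp: pairwise_def orthogonal_def)
    also have "\<dots> = inner x y" using C(1) that by (cases "x = 0") auto
    finally have "inner a' x = inner y x - inner x y" unfolding a'_def by (simp add: inner_diff_left)
    then show ?thesis  by (simp add: inner_commute)
  qed
  have a'Z: "inner a' u = 0" if "u \<in> Z" for u
  proof (rule orth_span_gen[of u C])
    show "u \<in> span C" using that C(3) span_base[of u Z] by simp
  qed (use a'C in auto)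
  have sumC: "(\<Sum>b\<in>C. (inner b y / inner b b) *\<^sub>R b) \<in> span Z"
    unfolding C(3)[symmetric] by (intro span_sum span_scale span_base)
  have a'ne: "a' \<noteq> 0"
  proof
    assume "a' = 0"
    then have "y = (\<Sum>b\<in>C. (inner b y / inner b b) *\<^sub>R b)" unfolding a'_def by simp
    with sumC y(2) show False by metis
  qed
  have a'Y: "a' \<in> span Y" unfolding a'_def
    using y(1) sumC \<open>span Z \<subseteq> span Y\<close> by (intro span_diff) auto
  show ?thesis
  proof (rule bexI[of _ "(1 / norm a') *\<^sub>R a'"])
    show "(1 / norm a') *\<^sub>R a' \<in> span Y" using a'Y by (rule span_scale)
    show "norm ((1 / norm a') *\<^sub>R a') = 1 \<and> (\<forall>u\<in>Z. inner ((1 / norm a') *\<^sub>R a') u = 0)"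
      using a'ne a'Z by simp
  qed
qed


lemma span_UN_cong:
  fixes A B :: "nat \<Rightarrow> 'v::real_vector set"
  assumes "\<And>k. k \<in> I \<Longrightarrow> span (A k) = span (B k)"
  shows "span (\<Union>k\<in>I. A k) = span (\<Union>k\<in>I. B k)"
proof -
  have *: "span (\<Union>k\<in>I. A k) \<subseteq> span (\<Union>k\<in>I. B k)" if "\<And>k. k \<in> I \<Longrightarrow> span (A k) = span (B k)" for A B :: "nat \<Rightarrow> 'v set"
  proof (rule span_minimal[OF _ subspace_span], clarify)
    fix k a assume "k \<in> I" "a \<in> A k"
    then have "a \<in> span (B k)" using that span_base[of a "A k"] by auto
    moreover have "span (B k) \<subseteq> span (\<Union>k\<in>I. B k)" using \<open>k \<in> I\<close> by (intro span_mono) auto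
    ultimately show "a \<in> span (\<Union>k\<in>I. B k)" by auto
  qed
  show ?thesis using *[of A B] *[of B A] assms by auto
qed



theorem theorem1:
  fixes K :: nat and p r :: "nat \<Rightarrow> nat" and rf R :: nat
    and x f :: "nat \<Rightarrow> nat \<Rightarrow> 'v::real_inner"
    and lam :: "nat \<Rightarrow> real" and eta :: "nat \<Rightarrow> nat \<Rightarrow> nat \<Rightarrow> real"
  assumes K2: "K \<ge> 2"
    and r_def: "\<forall>k\<in>{1..K}. r k = dim (span (x k ` {..<p k})) \<and> r k \<ge> 1"
    and rf_def: "rf = dim (span (\<Union>k\<in>{1..K}. x k ` {..<p k}))"
    and f_orthonormal: "\<forall>k\<in>{1..K}. \<forall>i<r k. \<forall>j<r k.
          inner (f k i) (f k j) = (if i = j then 1 else 0)"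
    and f_span: "\<forall>k\<in>{1..K}. span (f k ` {..<r k}) = span (x k ` {..<p k})"
    and R_def: "R = (\<Sum>k=1..K. r k)"
    and eta_eigen: "\<forall>l\<in>{1..R}. \<forall>k\<in>{1..K}. \<forall>i<r k.
          (\<Sum>k'=1..K. \<Sum>i'<r k'. inner (f k i) (f k' i') * eta l k' i') = lam l * eta l k i"
    and eta_orthonormal: "\<forall>l\<in>{1..R}. \<forall>m\<in>{1..R}.
          (\<Sum>k=1..K. \<Sum>i<r k. eta l k i * eta m k i) = (if l = m then 1 else 0)"
    and lam_sorted: "\<forall>l m. 1 \<le> l \<and> l \<le> m \<and> m \<le> R \<longrightarrow> lam m \<le> lam l"
  shows
    \<comment> \<open>(i)\<close>
    "(\<forall>l\<in>{1..rf}. \<forall>z. (\<forall>k\<in>{1..K}. gcca_z_i_choice (\<lambda>k. x k ` {..<p k}) r f eta l k (z k)) \<longrightarrow>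
        gcca_stage_solution K (\<lambda>k. x k ` {..<p k})
           (insert 0 (gcca_w K r f lam eta ` {1..<l})) z (gcca_w K r f lam eta l) \<and>
        (\<forall>k\<in>{1..K}. corr (z k) (gcca_w K r f lam eta l) = sqrt (lam l) * blk_norm (r k) (eta l k)
                   \<or> corr (z k) (gcca_w K r f lam eta l) = - (sqrt (lam l) * blk_norm (r k) (eta l k))) \<and>
        (\<Sum>k=1..K. (corr (z k) (gcca_w K r f lam eta l))\<^sup>2) = lam l)
     \<and> span (\<Union>k\<in>{1..K}. x k ` {..<p k}) = span (gcca_w K r f lam eta ` {1..rf})
     \<comment> \<open>(ii)\<close>
     \<and> (\<forall>l\<in>{1..rf}. \<forall>k\<in>{1..K}.
          (blk_zero (r k) (eta l k) \<longleftrightarrow>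
             (\<forall>v\<in>span (x k ` {..<p k}). inner (gcca_w K r f lam eta l) v = 0)) \<and>
          theta (gcca_z_ii r f eta l k) (gcca_w K r f lam eta l) \<in> {0..pi/2})
     \<and> (\<forall>k\<in>{1..K}. span ((\<lambda>l. gcca_z_ii r f eta l k) ` {1..rf}) = span (x k ` {..<p k}))
     \<comment> \<open>(iii)\<close>
     \<and> (\<forall>zz :: nat \<Rightarrow> nat \<Rightarrow> 'v.
          ((\<forall>m\<in>{1..rf}. \<forall>k\<in>{1..K}. gcca_z_i_choice (\<lambda>k. x k ` {..<p k}) r f eta m k (zz m k)) \<or>
           (\<forall>m\<in>{1..rf}. \<forall>k\<in>{1..K}. zz m k = gcca_z_ii r f eta m k)) \<longrightarrow>
          (\<forall>l\<in>{1..rf}. \<forall>k\<in>{1..K}.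
             lam l \<le> 1 \<and> span ((\<lambda>m. zz m k) ` {1..<l}) \<noteq> span (x k ` {..<p k}) \<longrightarrow>
             (\<exists>z w. gcca_stage_solution K (\<lambda>k. x k ` {..<p k})
                        (insert 0 (gcca_w K r f lam eta ` {1..<l})) z w \<and>
                     w \<in> span (x k ` {..<p k}) \<and>
                     (\<forall>v\<in>span (\<Union>j\<in>{1..K} - {k}. x j ` {..<p j}). inner w v = 0))))"
proof -
  define X where "X k = x k ` {..<p k}" for k
  define S where "S = Sigma {1..K} (\<lambda>k. {..<r k})"
  define u where "u m = (\<Sum>(k,i)\<in>S. eta m k i *\<^sub>R f k i)" for m
  define w where "w = gcca_w K r f lam eta"
  have finS: "finite S" unfolding S_def by simp
  have cardS: "card S = R" unfolding S_def R_def by simp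
  have sumS: "(\<Sum>k=1..K. \<Sum>i<r k. g k i) = (\<Sum>(k,i)\<in>S. g k i)" for g :: "nat \<Rightarrow> nat \<Rightarrow> real"
    unfolding S_def by (rule sum.Sigma) auto
  have sumSv: "(\<Sum>k=1..K. \<Sum>i<r k. g k i) = (\<Sum>(k,i)\<in>S. g k i)" for g :: "nat \<Rightarrow> nat \<Rightarrow> 'v"
    unfolding S_def by (rule sum.Sigma) auto
  have memS: "(k,i) \<in> S \<longleftrightarrow> k \<in> {1..K} \<and> i < r k" for k i unfolding S_def by auto
  have memS2: "(k,i) \<in> S" if "k \<in> {1..K}" "i < r k" for k i using that unfolding S_def by auto
  have w_u: "w l = (1 / sqrt (lam l)) *\<^sub>R u l" for l
    unfolding w_def gcca_w_def u_def sumSv ..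
  have fu: "inner (f k i) (u m) = lam m * eta m k i" if "m \<in> {1..R}" "(k,i) \<in> S" for m k i
  proof -
    have "inner (f k i) (u m) = (\<Sum>(k',i')\<in>S. inner (f k i) (f k' i') * eta m k' i')"
      unfolding u_def inner_sum_right by (intro sum.cong) (auto simp: mult.commute)
    also have "\<dots> = lam m * eta m k i" using eta_eigen that by (simp add: sumS[symmetric] memS)
    finally show ?thesis .
  qed
  have uu: "inner (u l) (u m) = (if l = m then lam m else 0)" if "l \<in> {1..R}" "m \<in> {1..R}" for l m
  proof -
    have "inner (u l) (u m) = (\<Sum>(k,i)\<in>S. eta l k i * inner (f k i) (u m))"
      unfolding u_def inner_sum_left by (intro sum.cong) auto
    also have "\<dots> = (\<Sum>(k,i)\<in>S. lam m * (eta l k i * eta m k i))"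
      by (intro sum.cong) (auto simp: fu[OF that(2)])
    also have "\<dots> = lam m * (\<Sum>(k,i)\<in>S. eta l k i * eta m k i)"
      by (simp add: sum_distrib_left case_prod_beta)
    also have "\<dots> = (if l = m then lam m else 0)"
      using eta_orthonormal that by (simp add: sumS[symmetric])
    finally show ?thesis .
  qed
  have lam_nn: "lam m \<ge> 0" if "m \<in> {1..R}" for m
    using uu[OF that that] inner_ge_zero[of "u m"] by simp
  have u0: "u m = 0" if "m \<in> {1..R}" "lam m = 0" for m
    using uu[OF that(1) that(1)] that(2) by simp
  have compl: "(\<Sum>m=1..R. eta m k i * eta m k' i') = (if (k,i) = (k',i') then 1 else 0)"
    if "(k,i) \<in> S" "(k',i') \<in> S" for k i k' i'
  proof -
    have orthS: "\<forall>l\<in>{1..R}. \<forall>m\<in>{1..R}. (\<Sum>s\<in>S. (\<lambda>(k,i). eta l k i) s * (\<lambda>(k,i). eta m k i) s) = (if l=m then 1 else 0)"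
    proof (intro ballI)
      fix l m assume lm: "l \<in> {1..R}" "m \<in> {1..R}"
      have "(\<Sum>(k,i)\<in>S. eta l k i * eta m k i) = (if l=m then 1 else 0)"
        using eta_orthonormal lm sumS[of "\<lambda>k i. eta l k i * eta m k i"] by simp
      then show "(\<Sum>s\<in>S. (\<lambda>(k,i). eta l k i) s * (\<lambda>(k,i). eta m k i) s) = (if l=m then 1 else 0)"
        by (simp add: case_prod_beta)
    qed
    from onb_complete[OF finS cardS orthS] that have "(\<Sum>m=1..R. (\<lambda>(k,i). eta m k i) (k,i) * (\<lambda>(k,i). eta m k i) (k',i')) = (if (k,i) = (k',i') then 1 else 0)"
      by blast
    then show ?thesis by simp
  qed
  have fexp: "f k i = (\<Sum>m=1..R. eta m k i *\<^sub>R u m)" if "(k,i) \<in> S" for k i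
  proof -
    have "(\<Sum>m=1..R. eta m k i *\<^sub>R u m) = (\<Sum>m=1..R. \<Sum>(k',i')\<in>S. (eta m k i * eta m k' i') *\<^sub>R f k' i')"
      unfolding u_def scaleR_sum_right by (intro sum.cong) (auto simp: case_prod_beta)
    also have "\<dots> = (\<Sum>(k',i')\<in>S. (\<Sum>m=1..R. eta m k i * eta m k' i') *\<^sub>R f k' i')"
      by (subst sum.swap) (simp add: scaleR_sum_left case_prod_beta)
    also have "\<dots> = (\<Sum>(k',i')\<in>S. if (k',i') = (k,i) then f k' i' else 0)"
    proof (rule sum.cong)
      fix s assume s: "s \<in> S"
      obtain k' i' where s': "s = (k',i')" by (cases s)
      show "(case s of (k',i') \<Rightarrow> (\<Sum>m=1..R. eta m k i * eta m k' i') *\<^sub>R f k' i') = (case s of (k',i') \<Rightarrow> if (k',i') = (k,i) then f k' i' else 0)"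
        using compl[OF that, of k' i'] s s' by auto
    qed simp
    also have "\<dots> = (\<Sum>s\<in>S. if s = (k,i) then f k i else 0)"
      by (rule sum.cong[OF refl]) (auto simp: case_prod_beta)
    also have "\<dots> = f k i" using that finS by simp
    finally show ?thesis by simp
  qed
  define P where "P = {m \<in> {1..R}. lam m > 0}"
  have finP: "finite P" unfolding P_def by simp
  have PR: "P \<subseteq> {1..R}" unfolding P_def by auto
  have uw: "u m = sqrt (lam m) *\<^sub>R w m" if "m \<in> P" for m
    using that unfolding P_def w_u by auto
  have ww: "inner (w l) (w m) = (if l = m then 1 else 0)" if "l \<in> P" "m \<in> P" for l m
  proof -
    have "inner (w l) (w m) = (1 / sqrt (lam l)) * (1 / sqrt (lam m)) * inner (u l) (u m)"
      unfolding w_u by simp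
    also have "\<dots> = (if l = m then 1 else 0)"
      using uu[of l m] that unfolding P_def by (auto simp: real_sqrt_mult[symmetric])
    finally show ?thesis .
  qed
  have nw: "norm (w m) = 1" if "m \<in> P" for m
    using ww[OF that that] by (simp add: norm_eq_sqrt_inner)
  have sumRP: "(\<Sum>m=1..R. g m) = (\<Sum>m\<in>P. g m)" if "\<And>m. m \<in> {1..R} \<Longrightarrow> lam m = 0 \<Longrightarrow> g m = 0" for g :: "nat \<Rightarrow> 'a::comm_monoid_add"
  proof (rule sum.mono_neutral_right)
    show "\<forall>m\<in>{1..R} - P. g m = 0"
    proof
      fix m assume m: "m \<in> {1..R} - P"
      then have "lam m = 0" using lam_nn[of m] unfolding P_def by auto
      then show "g m = 0" using that m by auto
    qed
  qed (auto simp: P_def)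
  have fexpP: "f k i = (\<Sum>m\<in>P. (eta m k i * sqrt (lam m)) *\<^sub>R w m)" if "(k,i) \<in> S" for k i
  proof -
    have "f k i = (\<Sum>m\<in>P. eta m k i *\<^sub>R u m)"
      using fexp[OF that] sumRP[of "\<lambda>m. eta m k i *\<^sub>R u m"] u0 by simp
    also have "\<dots> = (\<Sum>m\<in>P. (eta m k i * sqrt (lam m)) *\<^sub>R w m)"
      by (intro sum.cong) (auto simp: uw)
    finally show ?thesis .
  qed
  have F7: "(\<Sum>(k,i)\<in>S. (inner (f k i) v)\<^sup>2) = (\<Sum>m\<in>P. lam m * (inner (w m) v)\<^sup>2)" for v
  proof -
    define a where "a k i = inner (f k i) v" for k i
    have a_exp: "a k i = (\<Sum>m=1..R. eta m k i * inner (u m) v)" if "(k,i) \<in> S" for k i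
      unfolding a_def by (subst fexp[OF that]) (simp add: inner_sum_left)
    have ua: "(\<Sum>(k,i)\<in>S. eta m k i * a k i) = inner (u m) v" for m
      unfolding u_def a_def inner_sum_left by (intro sum.cong) auto
    have "(\<Sum>(k,i)\<in>S. (a k i)\<^sup>2) = (\<Sum>(k,i)\<in>S. a k i * (\<Sum>m=1..R. eta m k i * inner (u m) v))"
      by (intro sum.cong) (auto simp: a_exp power2_eq_square)
    also have "\<dots> = (\<Sum>m=1..R. inner (u m) v * (\<Sum>(k,i)\<in>S. eta m k i * a k i))"
      by (simp add: sum_distrib_left sum_distrib_right case_prod_beta mult.commute mult.left_commute) (rule sum.swap)
    also have "\<dots> = (\<Sum>m=1..R. (inner (u m) v)\<^sup>2)" by (simp add: ua power2_eq_square)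
    also have "\<dots> = (\<Sum>m\<in>P. (inner (u m) v)\<^sup>2)" by (rule sumRP) (simp add: u0)
    also have "\<dots> = (\<Sum>m\<in>P. lam m * (inner (w m) v)\<^sup>2)"
      by (intro sum.cong) (auto simp: uw power_mult_distrib P_def)
    finally show ?thesis unfolding a_def .
  qed
  have fS_UN: "(\<Union>k\<in>{1..K}. f k ` {..<r k}) = (\<lambda>(k,i). f k i) ` S"
    unfolding S_def by auto
  have spanX: "span (\<Union>k\<in>{1..K}. X k) = span ((\<lambda>(k,i). f k i) ` S)"
    unfolding fS_UN[symmetric] X_def using f_span by (intro span_UN_cong) auto
  have spanW: "span ((\<lambda>(k,i). f k i) ` S) = span (w ` P)"
  proof
    show "span ((\<lambda>(k,i). f k i) ` S) \<subseteq> span (w ` P)"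
    proof (rule span_minimal[OF _ subspace_span], clarify)
      fix k i assume "(k,i) \<in> S"
      then show "f k i \<in> span (w ` P)"
      proof -
        have "(\<Sum>m\<in>P. (eta m k i * sqrt (lam m)) *\<^sub>R w m) \<in> span (w ` P)"
          by (intro span_sum span_scale span_base) auto
        then show ?thesis using fexpP[OF \<open>(k,i) \<in> S\<close>] by simp
      qed
    qed
    show "span (w ` P) \<subseteq> span ((\<lambda>(k,i). f k i) ` S)"
    proof (rule span_minimal[OF _ subspace_span], clarify)
      fix m assume "m \<in> P"
      have "u m \<in> span ((\<lambda>(k,i). f k i) ` S)"
        unfolding u_def by (intro span_sum) (clarsimp, intro span_scale span_base, force)
      then show "w m \<in> span ((\<lambda>(k,i). f k i) ` S)" unfolding w_u by (rule span_scale)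
    qed
  qed
  have injw: "inj_on w P"
  proof (rule inj_onI)
    fix l m assume lm: "l \<in> P" "m \<in> P" "w l = w m"
    have "inner (w l) (w m) = 1" using lm(3) ww[OF lm(2) lm(2)] by simp
    then show "l = m" using ww[OF lm(1) lm(2)] by (auto split: if_splits)
  qed
  have indepw: "independent (w ` P)"
  proof (rule pairwise_orthogonal_independent)
    show "pairwise orthogonal (w ` P)"
      unfolding pairwise_def orthogonal_def
    proof (intro ballI impI)
      fix a b assume ab: "a \<in> w ` P" "b \<in> w ` P" "a \<noteq> b"
      then obtain l m where lm: "l \<in> P" "m \<in> P" "a = w l" "b = w m" by blast
      then have "l \<noteq> m" using ab by auto
      then show "inner a b = 0" using ww[OF lm(1) lm(2)] lm by simp
    qed
    show "0 \<notin> w ` P"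
    proof
      assume "0 \<in> w ` P"
      then obtain m where m: "m \<in> P" "0 = w m" by (rule imageE)
      have "norm (w m) = 1" using nw[OF m(1)] .
      then show False unfolding m(2)[symmetric] by simp
    qed
  qed
  have rfP: "rf = card P"
  proof -
    have "rf = dim (span (w ` P))" unfolding rf_def spanX[unfolded X_def] spanW ..
    also have "\<dots> = card (w ` P)" by (simp add: dim_eq_card_independent[OF indepw])
    also have "\<dots> = card P" using card_image[OF injw] .
    finally show ?thesis .
  qed
  have P_eq: "P = {1..rf}"
  proof -
    have down: "l \<in> P" if "m \<in> P" "1 \<le> l" "l \<le> m" for l m
    proof -
      have mR: "m \<le> R" "lam m > 0" using that(1) unfolding P_def by auto
      have "lam m \<le> lam l" using lam_sorted[rule_format, of l m] that(2,3) mR(1) by blast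
      then show ?thesis using mR that(2,3) unfolding P_def by simp
    qed
    have "P \<subseteq> {1..rf}"
    proof
      fix m assume m: "m \<in> P"
      have sub: "{1..m} \<subseteq> P" using down[OF m] by auto
      have "m = card {1..m}" by simp
      also have "\<dots> \<le> card P" by (rule card_mono[OF finP sub])
      finally have "m \<le> card P" .
      moreover have "1 \<le> m" using m PR by auto
      ultimately show "m \<in> {1..rf}" using rfP by simp
    qed
    moreover have "card P = card {1..rf}" using rfP by simp
    ultimately show ?thesis using card_subset_eq[of "{1..rf}" P] by simp
  qed
  have inP: "l \<in> P" if "l \<in> {1..rf}" for l using that by (subst P_eq)
  have lam_pos: "lam l > 0" if "l \<in> {1..rf}" for l
    using inP[OF that] unfolding P_def by blast
  have rfR: "rf \<le> R" using PR unfolding P_eq by auto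
  have wwr: "inner (w l) (w m) = (if l = m then 1 else 0)" if "l \<in> {1..rf}" "m \<in> {1..rf}" for l m
    using ww[OF inP[OF that(1)] inP[OF that(2)]] .
  have nwr: "norm (w l) = 1" if "l \<in> {1..rf}" for l using nw[OF inP[OF that]] .
  have fw: "inner (f k i) (w l) = sqrt (lam l) * eta l k i" if "l \<in> {1..rf}" "(k,i) \<in> S" for l k i
  proof -
    have lR: "l \<in> {1..R}" using that(1) rfR by auto
    have "inner (f k i) (w l) = (1 / sqrt (lam l)) * (lam l * eta l k i)"
      unfolding w_u using fu[OF lR that(2)] by simp
    also have "\<dots> = sqrt (lam l) * eta l k i"
      using lam_pos[OF that(1)] by (simp add: field_simps real_sqrt_mult[symmetric] del: real_sqrt_mult)
    finally show ?thesis .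
  qed
  have bound: "(\<Sum>(k,i)\<in>S. (inner (f k i) v)\<^sup>2) \<le> lam l"
    if l: "l \<in> {1..rf}" and nv: "norm v = 1" and perp: "\<forall>m\<in>{1..<l}. inner v (w m) = 0" for l v
  proof -
    have "(\<Sum>(k,i)\<in>S. (inner (f k i) v)\<^sup>2) = (\<Sum>m\<in>{1..rf}. lam m * (inner (w m) v)\<^sup>2)"
      using F7[of v] P_eq by simp
    also have "\<dots> \<le> (\<Sum>m\<in>{1..rf}. lam l * (inner (w m) v)\<^sup>2)"
    proof (rule sum_mono)
      fix m assume m: "m \<in> {1..rf}"
      show "lam m * (inner (w m) v)\<^sup>2 \<le> lam l * (inner (w m) v)\<^sup>2"
      proof (cases "m < l")
        case True
        then have "inner (w m) v = 0" using perp m by (simp add: inner_commute)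
        then show ?thesis by simp
      next
        case False
        then have "lam m \<le> lam l" using lam_sorted[rule_format, of l m] l m rfR by auto
        then show ?thesis by (intro mult_right_mono) auto
      qed
    qed
    also have "\<dots> = lam l * (\<Sum>m\<in>{1..rf}. (inner (w m) v)\<^sup>2)" by (simp add: sum_distrib_left)
    also have "\<dots> \<le> lam l * inner v v"
      using bessel[of "{1..rf}" w v] wwr lam_pos[OF l] by (intro mult_left_mono) auto
    also have "\<dots> = lam l" using nv by (simp add: dot_square_norm)
    finally show ?thesis .
  qed
  have forth: "\<forall>i<r k. \<forall>j<r k. inner (f k i) (f k j) = (if i = j then 1 else 0)" if "k \<in> {1..K}" for k
    using f_orthonormal that by blast
  have spanXk: "span (x k ` {..<p k}) = span (f k ` {..<r k})" if "k \<in> {1..K}" for k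
    using f_span that by simp
  have corr_bound: "(corr z v)\<^sup>2 \<le> (\<Sum>i<r k. (inner (f k i) v)\<^sup>2)"
    if k: "k \<in> {1..K}" and z: "z \<in> span (x k ` {..<p k})" "norm z = 1" and nv: "norm v = 1" for k z v
  proof -
    have zs: "z \<in> span (f k ` {..<r k})" using z(1) spanXk[OF k] by simp
    have "corr z v = inner z v" unfolding corr_def using z(2) nv by simp
    also have "\<dots> = (\<Sum>i<r k. inner z (f k i) * inner (f k i) v)" by (rule onb_inner[OF forth[OF k] zs])
    finally have "(corr z v)\<^sup>2 \<le> (\<Sum>i<r k. (inner z (f k i))\<^sup>2) * (\<Sum>i<r k. (inner (f k i) v)\<^sup>2)"
      using Cauchy_Schwarz_ineq_sum by simp
    also have "(\<Sum>i<r k. (inner z (f k i))\<^sup>2) = 1"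
      using onb_norm[OF forth[OF k] zs] z(2) by (simp add: dot_square_norm)
    finally show ?thesis by simp
  qed
  have obj_bound: "gcca_obj K z' w' \<le> lam l"
    if l: "l \<in> {1..rf}" and feas: "gcca_feasible K (\<lambda>k. x k ` {..<p k}) (insert 0 (w ` {1..<l})) z' w'" for l z' w'
  proof -
    have nw': "norm w' = 1" and perp: "\<forall>m\<in>{1..<l}. inner w' (w m) = 0"
      and zk: "\<forall>k\<in>{1..K}. z' k \<in> span (x k ` {..<p k}) \<and> norm (z' k) = 1"
      using feas unfolding gcca_feasible_def by auto
    have "gcca_obj K z' w' \<le> (\<Sum>k=1..K. \<Sum>i<r k. (inner (f k i) w')\<^sup>2)"
      unfolding gcca_obj_def using zk nw' by (intro sum_mono corr_bound) auto
    also have "\<dots> = (\<Sum>(k,i)\<in>S. (inner (f k i) w')\<^sup>2)" by (rule sumS)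
    also have "\<dots> \<le> lam l" by (rule bound[OF l nw' perp])
    finally show ?thesis .
  qed
  have bnorm_sq: "(blk_norm (r k) (eta l k))\<^sup>2 = (\<Sum>i<r k. (eta l k i)\<^sup>2)" for l k
    unfolding blk_norm_def by (simp add: sum_nonneg)
  have bzero_iff: "blk_zero (r k) (eta l k) \<longleftrightarrow> blk_norm (r k) (eta l k) = 0" for l k
    unfolding blk_zero_def blk_norm_def by (simp add: sum_nonneg_eq_0_iff) blast
  have bnorm_nn: "blk_norm (r k) (eta l k) \<ge> 0" for l k
    unfolding blk_norm_def by (simp add: sum_nonneg)
  have zii_zero: "blk_zero (r k) (eta l k) \<Longrightarrow> gcca_z_ii r f eta l k = 0" for l k
    unfolding gcca_z_ii_def by simp
  have zii_exp: "\<not> blk_zero (r k) (eta l k) \<Longrightarrow>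
      gcca_z_ii r f eta l k = (\<Sum>i<r k. (eta l k i / blk_norm (r k) (eta l k)) *\<^sub>R f k i)" for l k
    unfolding gcca_z_ii_def by simp
  have sumk: "(\<Sum>i<r k. g i) = 0" if "blk_zero (r k) (eta l k)" "\<And>i. i < r k \<Longrightarrow> eta l k i = 0 \<Longrightarrow> g i = 0" for l k and g :: "nat \<Rightarrow> 'a::comm_monoid_add"
    using that unfolding blk_zero_def by (intro sum.neutral) auto
  have zii_inner: "inner (gcca_z_ii r f eta l k) (w l) = sqrt (lam l) * blk_norm (r k) (eta l k)"
    if l: "l \<in> {1..rf}" and k: "k \<in> {1..K}" for l k
  proof (cases "blk_zero (r k) (eta l k)")
    case True then show ?thesis using zii_zero bzero_iff by simp
  next
    case False
    define N where "N = blk_norm (r k) (eta l k)"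
    have Nne: "N \<noteq> 0" using False bzero_iff N_def by simp
    have "inner (gcca_z_ii r f eta l k) (w l) = (\<Sum>i<r k. (eta l k i / N) * (sqrt (lam l) * eta l k i))"
      unfolding zii_exp[OF False] N_def[symmetric] inner_sum_left
      by (intro sum.cong) (auto simp: fw[OF l memS2[OF k]])
    also have "\<dots> = sqrt (lam l) / N * (\<Sum>i<r k. (eta l k i)\<^sup>2)"
      by (simp add: sum_distrib_left power2_eq_square field_simps)
    also have "\<dots> = sqrt (lam l) / N * N\<^sup>2" unfolding N_def bnorm_sq ..
    also have "\<dots> = sqrt (lam l) * N" using Nne by (simp add: power2_eq_square)
    finally show ?thesis unfolding N_def .
  qed
  have zii_norm: "norm (gcca_z_ii r f eta l k) = 1" if k: "k \<in> {1..K}" and nz: "\<not> blk_zero (r k) (eta l k)" for l k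
  proof -
    define N where "N = blk_norm (r k) (eta l k)"
    have Nne: "N \<noteq> 0" using nz bzero_iff N_def by simp
    have "inner (gcca_z_ii r f eta l k) (gcca_z_ii r f eta l k) = (\<Sum>i<r k. (eta l k i / N)\<^sup>2)"
      unfolding zii_exp[OF nz] N_def[symmetric] by (rule onb_norm_comb[OF forth[OF k]])
    also have "\<dots> = (\<Sum>i<r k. (eta l k i)\<^sup>2) / N\<^sup>2" by (simp add: power_divide sum_divide_distrib)
    also have "\<dots> = 1" using Nne unfolding N_def bnorm_sq[symmetric] by simp
    finally show ?thesis by (simp add: norm_eq_sqrt_inner)
  qed
  have zii_span: "gcca_z_ii r f eta l k \<in> span (x k ` {..<p k})" if k: "k \<in> {1..K}" for l k
  proof -
    have "(\<Sum>i<r k. (eta l k i / blk_norm (r k) (eta l k)) *\<^sub>R f k i) \<in> span (f k ` {..<r k})"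
      by (intro span_sum span_scale span_base) auto
    then show ?thesis unfolding spanXk[OF k] gcca_z_ii_def by (simp add: span_zero)
  qed
  have perp_zero: "inner z (w l) = 0"
    if l: "l \<in> {1..rf}" and k: "k \<in> {1..K}" and bz: "blk_zero (r k) (eta l k)" and z: "z \<in> span (x k ` {..<p k})" for l k z
  proof -
    have zs: "z \<in> span (f k ` {..<r k})" using z spanXk[OF k] by simp
    have "inner z (w l) = (\<Sum>i<r k. inner z (f k i) * inner (f k i) (w l))" by (rule onb_inner[OF forth[OF k] zs])
    also have "\<dots> = 0" by (rule sumk[OF bz]) (simp add: fw[OF l memS2[OF k]])
    finally show ?thesis .
  qed
  have sumN: "(\<Sum>k=1..K. (blk_norm (r k) (eta l k))\<^sup>2) = 1" if l: "l \<in> {1..rf}" for l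
  proof -
    have lR: "l \<in> {1..R}" using l rfR by auto
    have "(\<Sum>k=1..K. (blk_norm (r k) (eta l k))\<^sup>2) = (\<Sum>k=1..K. \<Sum>i<r k. eta l k i * eta l k i)"
      unfolding bnorm_sq by (simp add: power2_eq_square)
    also have "\<dots> = 1" using eta_orthonormal lR by simp
    finally show ?thesis .
  qed
  have partI: "\<forall>l\<in>{1..rf}. \<forall>z. (\<forall>k\<in>{1..K}. gcca_z_i_choice (\<lambda>k. x k ` {..<p k}) r f eta l k (z k)) \<longrightarrow>
        gcca_stage_solution K (\<lambda>k. x k ` {..<p k}) (insert 0 (w ` {1..<l})) z (w l) \<and>
        (\<forall>k\<in>{1..K}. corr (z k) (w l) = sqrt (lam l) * blk_norm (r k) (eta l k)
                   \<or> corr (z k) (w l) = - (sqrt (lam l) * blk_norm (r k) (eta l k))) \<and>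
        (\<Sum>k=1..K. (corr (z k) (w l))\<^sup>2) = lam l"
  proof (intro ballI allI impI)
    fix l z assume l: "l \<in> {1..rf}" and zc: "\<forall>k\<in>{1..K}. gcca_z_i_choice (\<lambda>k. x k ` {..<p k}) r f eta l k (z k)"
    have zk: "z k \<in> span (x k ` {..<p k}) \<and> norm (z k) = 1 \<and>
        (corr (z k) (w l) = sqrt (lam l) * blk_norm (r k) (eta l k)
         \<or> corr (z k) (w l) = - (sqrt (lam l) * blk_norm (r k) (eta l k)))" if k: "k \<in> {1..K}" for k
    proof (cases "blk_zero (r k) (eta l k)")
      case True
      then have z1: "z k \<in> span (x k ` {..<p k})" "norm (z k) = 1"
        using zc k unfolding gcca_z_i_choice_def by auto
      have "corr (z k) (w l) = 0" unfolding corr_def using perp_zero[OF l k True z1(1)] by simp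
      then show ?thesis using z1 True bzero_iff by simp
    next
      case False
      then have "z k = gcca_z_ii r f eta l k \<or> z k = - gcca_z_ii r f eta l k"
        using zc k unfolding gcca_z_i_choice_def by auto
      then show ?thesis
        using zii_span[OF k, of l] zii_norm[OF k False] zii_inner[OF l k] nwr[OF l]
        by (auto simp: corr_def span_neg)
    qed
    have sq: "(corr (z k) (w l))\<^sup>2 = lam l * (blk_norm (r k) (eta l k))\<^sup>2" if k: "k \<in> {1..K}" for k
      using zk[OF k] lam_pos[OF l] by (auto simp: power_mult_distrib)
    have obj: "gcca_obj K z (w l) = lam l"
    proof -
      have "gcca_obj K z (w l) = (\<Sum>k=1..K. lam l * (blk_norm (r k) (eta l k))\<^sup>2)"
        unfolding gcca_obj_def by (intro sum.cong) (auto simp: sq)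
      also have "\<dots> = lam l" using sumN[OF l] by (simp add: sum_distrib_left[symmetric])
      finally show ?thesis .
    qed
    have feas: "gcca_feasible K (\<lambda>k. x k ` {..<p k}) (insert 0 (w ` {1..<l})) z (w l)"
      unfolding gcca_feasible_def
    proof (intro conjI ballI)
      show "norm (w l) = 1" by (rule nwr[OF l])
    next
      fix k assume "k \<in> {1..K}" then show "z k \<in> span (x k ` {..<p k})" "norm (z k) = 1" using zk by auto
    next
      fix u assume "u \<in> insert 0 (w ` {1..<l})"
      then consider "u = 0" | m where "m \<in> {1..<l}" "u = w m" by blast
      then show "inner (w l) u = 0"
      proof cases
        case 2
        then have "m \<in> {1..rf}" "m \<noteq> l" using l by auto
        then show ?thesis using wwr[OF l, of m] 2 by simp
      qed simp
    qed
    have A: "gcca_stage_solution K (\<lambda>k. x k ` {..<p k}) (insert 0 (w ` {1..<l})) z (w l)"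
      unfolding gcca_stage_solution_def using feas obj obj_bound[OF l] by auto
    have B: "\<forall>k\<in>{1..K}. corr (z k) (w l) = sqrt (lam l) * blk_norm (r k) (eta l k)
                   \<or> corr (z k) (w l) = - (sqrt (lam l) * blk_norm (r k) (eta l k))" using zk by blast
    have C: "(\<Sum>k=1..K. (corr (z k) (w l))\<^sup>2) = lam l" using obj unfolding gcca_obj_def .
    show "gcca_stage_solution K (\<lambda>k. x k ` {..<p k}) (insert 0 (w ` {1..<l})) z (w l) \<and>
        (\<forall>k\<in>{1..K}. corr (z k) (w l) = sqrt (lam l) * blk_norm (r k) (eta l k)
                   \<or> corr (z k) (w l) = - (sqrt (lam l) * blk_norm (r k) (eta l k))) \<and>
        (\<Sum>k=1..K. (corr (z k) (w l))\<^sup>2) = lam l" using A B C by blast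
  qed
  have spanXW: "span (\<Union>k\<in>{1..K}. x k ` {..<p k}) = span (w ` {1..rf})"
    using spanX spanW P_eq unfolding X_def by simp
  have partIIa: "\<forall>l\<in>{1..rf}. \<forall>k\<in>{1..K}.
          (blk_zero (r k) (eta l k) \<longleftrightarrow> (\<forall>v\<in>span (x k ` {..<p k}). inner (w l) v = 0)) \<and>
          theta (gcca_z_ii r f eta l k) (w l) \<in> {0..pi/2}"
  proof (intro ballI conjI)
    fix l k assume l: "l \<in> {1..rf}" and k: "k \<in> {1..K}"
    show "blk_zero (r k) (eta l k) \<longleftrightarrow> (\<forall>v\<in>span (x k ` {..<p k}). inner (w l) v = 0)"
    proof
      assume bz: "blk_zero (r k) (eta l k)"
      show "\<forall>v\<in>span (x k ` {..<p k}). inner (w l) v = 0"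
        using perp_zero[OF l k bz] by (simp add: inner_commute)
    next
      assume H: "\<forall>v\<in>span (x k ` {..<p k}). inner (w l) v = 0"
      show "blk_zero (r k) (eta l k)" unfolding blk_zero_def
      proof (intro allI impI)
        fix i assume i: "i < r k"
        have "f k i \<in> span (x k ` {..<p k})" unfolding spanXk[OF k] using i by (intro span_base) auto
        then have "inner (w l) (f k i) = 0" using H by blast
        then have "inner (f k i) (w l) = 0" by (simp add: inner_commute)
        then show "eta l k i = 0" using fw[OF l memS2[OF k i]] lam_pos[OF l] by simp
      qed
    qed
    show "theta (gcca_z_ii r f eta l k) (w l) \<in> {0..pi/2}"
    proof (cases "blk_zero (r k) (eta l k)")
      case True
      then show ?thesis unfolding theta_def corr_def using zii_zero[OF True] by simp
    next
      case False
      define c where "c = corr (gcca_z_ii r f eta l k) (w l)"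
      have c_eq: "c = inner (gcca_z_ii r f eta l k) (w l)"
        unfolding c_def corr_def using zii_norm[OF k False] nwr[OF l] by simp
      have c0: "0 \<le> c" unfolding c_eq zii_inner[OF l k] using bnorm_nn[of k l] lam_pos[OF l] by simp
      have c1: "c \<le> 1" unfolding c_eq
        using norm_cauchy_schwarz[of "gcca_z_ii r f eta l k" "w l"] zii_norm[OF k False] nwr[OF l] by simp
      show ?thesis unfolding theta_def c_def[symmetric]
        using arccos_lbound[of c] arccos_le_pi2[OF c0 c1] c0 c1 by simp
    qed
  qed
  have partIIb: "\<forall>k\<in>{1..K}. span ((\<lambda>l. gcca_z_ii r f eta l k) ` {1..rf}) = span (x k ` {..<p k})"
  proof
    fix k assume k: "k \<in> {1..K}"
    define Pk where "Pk y = (\<Sum>i<r k. inner (f k i) y *\<^sub>R f k i)" for y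
    have linPk: "linear Pk"
      by (rule linearI) (simp_all add: Pk_def inner_add_right scaleR_add_left sum.distrib scaleR_sum_right)
    have Pkf: "Pk (f k i) = f k i" if i: "i < r k" for i
    proof -
      have "Pk (f k i) = (\<Sum>j<r k. if j = i then f k j else 0)"
        unfolding Pk_def using forth[OF k] i by (intro sum.cong) auto
      then show ?thesis using i by simp
    qed
    have Pkw: "Pk (w m) \<in> span ((\<lambda>l. gcca_z_ii r f eta l k) ` {1..rf})" if m: "m \<in> {1..rf}" for m
    proof (cases "blk_zero (r k) (eta m k)")
      case True
      have "Pk (w m) = 0" unfolding Pk_def
        by (rule sumk[OF True]) (simp add: fw[OF m memS2[OF k]])
      then show ?thesis by (simp add: span_zero)
    next
      case False
      have "Pk (w m) = (\<Sum>i<r k. (sqrt (lam m) * eta m k i) *\<^sub>R f k i)"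
        unfolding Pk_def by (intro sum.cong) (auto simp: fw[OF m memS2[OF k]])
      also have "\<dots> = (sqrt (lam m) * blk_norm (r k) (eta m k)) *\<^sub>R gcca_z_ii r f eta m k"
        using False bzero_iff[of k m] unfolding zii_exp[OF False] scaleR_sum_right by (intro sum.cong) auto
      also have "\<dots> \<in> span ((\<lambda>l. gcca_z_ii r f eta l k) ` {1..rf})"
        using m by (intro span_scale span_base) auto
      finally show ?thesis .
    qed
    show "span ((\<lambda>l. gcca_z_ii r f eta l k) ` {1..rf}) = span (x k ` {..<p k})"
    proof
      show "span ((\<lambda>l. gcca_z_ii r f eta l k) ` {1..rf}) \<subseteq> span (x k ` {..<p k})"
        using zii_span[OF k] by (intro span_minimal[OF _ subspace_span]) auto
      have "f k i \<in> span ((\<lambda>l. gcca_z_ii r f eta l k) ` {1..rf})" if i: "i < r k" for i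
      proof -
        have "f k i \<in> span (\<Union>k\<in>{1..K}. x k ` {..<p k})"
          unfolding spanX[unfolded X_def] using k i memS2[OF k i] by (intro span_base) auto
        then have "f k i \<in> span (w ` {1..rf})" using spanXW by simp
        then have "Pk (f k i) \<in> Pk ` span (w ` {1..rf})" by blast
        also have "\<dots> = span (Pk ` w ` {1..rf})" using span_linear_image[OF linPk] by simp
        also have "\<dots> \<subseteq> span ((\<lambda>l. gcca_z_ii r f eta l k) ` {1..rf})"
          using Pkw by (intro span_minimal[OF _ subspace_span]) auto
        finally show ?thesis using Pkf[OF i] by simp
      qed
      then have "span (f k ` {..<r k}) \<subseteq> span ((\<lambda>l. gcca_z_ii r f eta l k) ` {1..rf})"
        by (intro span_minimal[OF _ subspace_span]) auto
      then show "span (x k ` {..<p k}) \<subseteq> span ((\<lambda>l. gcca_z_ii r f eta l k) ` {1..rf})"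
        using spanXk[OF k] by simp
    qed
  qed
  have partIII: "\<forall>zz :: nat \<Rightarrow> nat \<Rightarrow> 'v.
          ((\<forall>m\<in>{1..rf}. \<forall>k\<in>{1..K}. gcca_z_i_choice (\<lambda>k. x k ` {..<p k}) r f eta m k (zz m k)) \<or>
           (\<forall>m\<in>{1..rf}. \<forall>k\<in>{1..K}. zz m k = gcca_z_ii r f eta m k)) \<longrightarrow>
          (\<forall>l\<in>{1..rf}. \<forall>k\<in>{1..K}.
             lam l \<le> 1 \<and> span ((\<lambda>m. zz m k) ` {1..<l}) \<noteq> span (x k ` {..<p k}) \<longrightarrow>
             (\<exists>z w'. gcca_stage_solution K (\<lambda>k. x k ` {..<p k})
                        (insert 0 (w ` {1..<l})) z w' \<and>
                     w' \<in> span (x k ` {..<p k}) \<and>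
                     (\<forall>v\<in>span (\<Union>j\<in>{1..K} - {k}. x j ` {..<p j}). inner w' v = 0)))"
  proof (intro allI impI ballI)
    fix zz :: "nat \<Rightarrow> nat \<Rightarrow> 'v" and l k
    assume hz: "(\<forall>m\<in>{1..rf}. \<forall>k\<in>{1..K}. gcca_z_i_choice (\<lambda>k. x k ` {..<p k}) r f eta m k (zz m k)) \<or>
           (\<forall>m\<in>{1..rf}. \<forall>k\<in>{1..K}. zz m k = gcca_z_ii r f eta m k)"
      and l: "l \<in> {1..rf}" and k: "k \<in> {1..K}"
      and hl: "lam l \<le> 1 \<and> span ((\<lambda>m. zz m k) ` {1..<l}) \<noteq> span (x k ` {..<p k})"
    have zzc: "zz m k \<in> span (x k ` {..<p k}) \<and>
        (\<not> blk_zero (r k) (eta m k) \<longrightarrow> zz m k = gcca_z_ii r f eta m k \<or> zz m k = - gcca_z_ii r f eta m k)"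
      if m: "m \<in> {1..rf}" for m
      using hz
    proof
      assume "\<forall>m\<in>{1..rf}. \<forall>k\<in>{1..K}. gcca_z_i_choice (\<lambda>k. x k ` {..<p k}) r f eta m k (zz m k)"
      then have c: "gcca_z_i_choice (\<lambda>k. x k ` {..<p k}) r f eta m k (zz m k)" using m k by blast
      show ?thesis
      proof (cases "blk_zero (r k) (eta m k)")
        case True then show ?thesis using c unfolding gcca_z_i_choice_def by simp
      next
        case False then show ?thesis using c zii_span[OF k, of m] unfolding gcca_z_i_choice_def
          by (auto simp: span_neg)
      qed
    next
      assume "\<forall>m\<in>{1..rf}. \<forall>k\<in>{1..K}. zz m k = gcca_z_ii r f eta m k"
      then have "zz m k = gcca_z_ii r f eta m k" using m k by blast
      then show ?thesis using zii_span[OF k, of m] by simp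
    qed
    have Zsub: "(\<lambda>m. zz m k) ` {1..<l} \<subseteq> span (x k ` {..<p k})"
      using zzc l by auto
    obtain z where z: "z \<in> span (x k ` {..<p k})" "norm z = 1" "\<forall>u\<in>(\<lambda>m. zz m k) ` {1..<l}. inner z u = 0"
      using exists_orth_vec[OF _ Zsub] hl by auto
    have zs: "z \<in> span (f k ` {..<r k})" using z(1) spanXk[OF k] by simp
    have zw: "inner z (w m) = 0" if m: "m \<in> {1..<l}" for m
    proof -
      have mr: "m \<in> {1..rf}" using m l by auto
      have "inner z (w m) = (\<Sum>i<r k. inner z (f k i) * inner (f k i) (w m))" by (rule onb_inner[OF forth[OF k] zs])
      also have "\<dots> = sqrt (lam m) * (\<Sum>i<r k. inner z (f k i) * eta m k i)"
        by (simp add: fw[OF mr memS2[OF k]] sum_distrib_left mult.left_commute)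
      also have "(\<Sum>i<r k. inner z (f k i) * eta m k i) = 0"
      proof (cases "blk_zero (r k) (eta m k)")
        case True then show ?thesis by (intro sumk[OF True]) simp
      next
        case False
        have zz0: "inner z (zz m k) = 0" using z(3) m by auto
        have "inner z (gcca_z_ii r f eta m k) = 0"
          using zzc[OF mr] False zz0 by auto
        then have "(\<Sum>i<r k. (eta m k i / blk_norm (r k) (eta m k)) * inner z (f k i)) = 0"
          unfolding zii_exp[OF False] inner_sum_right by simp
        then have "(1 / blk_norm (r k) (eta m k)) * (\<Sum>i<r k. inner z (f k i) * eta m k i) = 0"
          by (simp add: sum_distrib_left mult.commute)
        then show ?thesis using False bzero_iff by simp
      qed
      finally show ?thesis by simp
    qed
    have zperp: "\<forall>m\<in>{1..<l}. inner z (w m) = 0" using zw by blast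
    have bz: "(\<Sum>(k,i)\<in>S. (inner (f k i) z)\<^sup>2) \<le> 1" using bound[OF l z(2) zperp] hl by simp
    have zk1: "(\<Sum>i<r k. (inner (f k i) z)\<^sup>2) = 1"
      using onb_norm[OF forth[OF k] zs] z(2) by (simp add: inner_commute dot_square_norm)
    have others: "inner (f j i) z = 0" if j: "j \<in> {1..K}" "j \<noteq> k" and i: "i < r j" for j i
    proof -
      have "(\<Sum>j=1..K. \<Sum>i<r j. (inner (f j i) z)\<^sup>2) \<le> 1" using bz sumS by simp
      moreover have "(\<Sum>j=1..K. \<Sum>i<r j. (inner (f j i) z)\<^sup>2) = (\<Sum>i<r k. (inner (f k i) z)\<^sup>2) + (\<Sum>j\<in>{1..K}-{k}. \<Sum>i<r j. (inner (f j i) z)\<^sup>2)"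
        using k by (simp add: sum.remove)
      ultimately have le0: "(\<Sum>j\<in>{1..K}-{k}. \<Sum>i<r j. (inner (f j i) z)\<^sup>2) \<le> 0" using zk1 by simp
      have "(\<Sum>i<r j. (inner (f j i) z)\<^sup>2) \<le> (\<Sum>j\<in>{1..K}-{k}. \<Sum>i<r j. (inner (f j i) z)\<^sup>2)"
        using j by (intro member_le_sum) (auto intro: sum_nonneg)
      moreover have "(inner (f j i) z)\<^sup>2 \<le> (\<Sum>i<r j. (inner (f j i) z)\<^sup>2)"
        using i by (intro member_le_sum) auto
      ultimately have "(inner (f j i) z)\<^sup>2 \<le> 0" using le0 by linarith
      then show ?thesis by simp
    qed
    have zorth: "\<forall>v\<in>span (\<Union>j\<in>{1..K} - {k}. x j ` {..<p j}). inner z v = 0"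
    proof
      fix v assume v: "v \<in> span (\<Union>j\<in>{1..K} - {k}. x j ` {..<p j})"
      show "inner z v = 0"
      proof (rule orth_span_gen[OF v])
        fix a assume "a \<in> (\<Union>j\<in>{1..K} - {k}. x j ` {..<p j})"
        then obtain j where j0: "j \<in> {1..K} - {k}" "a \<in> x j ` {..<p j}" by blast
        then have j: "j \<in> {1..K}" "j \<noteq> k" "a \<in> x j ` {..<p j}" by auto
        have "a \<in> span (f j ` {..<r j})" using j(3) spanXk[OF j(1)] span_base[of a "x j ` {..<p j}"] by simp
        then show "inner z a = 0"
          by (rule orth_span_gen) (use others[OF j(1) j(2)] in \<open>auto simp: inner_commute\<close>)
      qed
    qed
    define zv where "zv j = (if j = k then z else f j 0)" for j
    have feas: "gcca_feasible K (\<lambda>k. x k ` {..<p k}) (insert 0 (w ` {1..<l})) zv z"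
      unfolding gcca_feasible_def
    proof (intro conjI ballI)
      fix j assume j: "j \<in> {1..K}"
      have rj: "0 < r j" using r_def j by (meson less_le_trans zero_less_one)
      show "zv j \<in> span (x j ` {..<p j})"
      proof (cases "j = k")
        case True then show ?thesis using z(1) zv_def by simp
      next
        case False
        have "f j 0 \<in> span (x j ` {..<p j})" unfolding spanXk[OF j] using rj by (intro span_base) auto
        then show ?thesis using False zv_def by simp
      qed
      show "norm (zv j) = 1"
      proof (cases "j = k")
        case True then show ?thesis using z(2) zv_def by simp
      next
        case False
        have "inner (f j 0) (f j 0) = 1" using forth[OF j] rj by simp
        then show ?thesis using False zv_def by (simp add: norm_eq_sqrt_inner)
      qed
    next
      show "norm z = 1" by (rule z(2))
    next
      fix u assume "u \<in> insert 0 (w ` {1..<l})"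
      then show "inner z u = 0" using zw by auto
    qed
    have objz: "1 \<le> gcca_obj K zv z"
    proof -
      have "(corr (zv k) z)\<^sup>2 = 1" unfolding zv_def corr_def using z(2) by (simp add: dot_square_norm)
      moreover have "(corr (zv k) z)\<^sup>2 \<le> gcca_obj K zv z"
        unfolding gcca_obj_def using k by (intro member_le_sum) auto
      ultimately show ?thesis by simp
    qed
    have sol: "gcca_stage_solution K (\<lambda>k. x k ` {..<p k}) (insert 0 (w ` {1..<l})) zv z"
      unfolding gcca_stage_solution_def using feas objz obj_bound[OF l] hl by force
    show "\<exists>z w'. gcca_stage_solution K (\<lambda>k. x k ` {..<p k}) (insert 0 (w ` {1..<l})) z w' \<and>
                     w' \<in> span (x k ` {..<p k}) \<and>
                     (\<forall>v\<in>span (\<Union>j\<in>{1..K} - {k}. x j ` {..<p j}). inner w' v = 0)"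
      using sol z(1) zorth by blast
  qed
  show ?thesis
    unfolding w_def[symmetric]
  proof (intro conjI)
    show "span (\<Union>k\<in>{1..K}. x k ` {..<p k}) = span (w ` {1..rf})" by (rule spanXW)
  qed (fact partI partIIa partIIb partIII)+
qed


end
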